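(* Let $n\ge 5$ and let $G$ be a tree on $n$ vertices with $G\not\cong P_n$. Then $\mathrm{irr}_t(G)\ge 4n-10$. Equality holds if and only if the degree sequence of $G$ is $(3,2,\ldots,2,1,1,1)$, i.e. $G$ has exactly one vertex of degree $3$, exactly $n-4$ vertices of degree $2$ and exactly $3$ vertices of degree $1$.
   Context: For a graph $G=(V,E)$ and $w\in V$, $d_G(w)$ is the degree of $w$. The total irregularity is $\mathrm{irr}_t(G)=\frac12\sum_{x,y\in V}|d_G(x)-d_G(y)|$, where the sum runs over all ordered pairs of vertices. $P_n$ is the path on $n$ vertices. Degree sequences are listed in nonincreasing order. *)

theory Defs
  imports Complex_Main
begin

definition simple_graph :: "'a set \<Rightarrow> 'a set set \<Rightarrow> bool" where
  "simple_graph V E \<longleftrightarrow> finite V \<and> (\<forall>e\<in>E. e \<subseteq> V \<and> card e = 2)"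

definition adj :: "'a set set \<Rightarrow> 'a \<Rightarrow> 'a \<Rightarrow> bool" where
  "adj E x y \<longleftrightarrow> {x, y} \<in> E"

definition degree :: "'a set set \<Rightarrow> 'a \<Rightarrow> nat" where
  "degree E v = card {e \<in> E. v \<in> e}"

definition connected_graph :: "'a set \<Rightarrow> 'a set set \<Rightarrow> bool" where
  "connected_graph V E \<longleftrightarrow> (\<forall>x\<in>V. \<forall>y\<in>V. (adj E)\<^sup>*\<^sup>* x y)"

definition is_cycle :: "'a set set \<Rightarrow> 'a list \<Rightarrow> bool" where
  "is_cycle E cs \<longleftrightarrow> length cs \<ge> 3 \<and> distinct cs \<and>
     (\<forall>i. Suc i < length cs \<longrightarrow> adj E (cs ! i) (cs ! Suc i)) \<and>
     adj E (last cs) (hd cs)"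

definition acyclic_graph :: "'a set set \<Rightarrow> bool" where
  "acyclic_graph E \<longleftrightarrow> (\<nexists>cs. is_cycle E cs)"

definition tree :: "'a set \<Rightarrow> 'a set set \<Rightarrow> bool" where
  "tree V E \<longleftrightarrow> simple_graph V E \<and> V \<noteq> {} \<and> connected_graph V E \<and> acyclic_graph E"

text \<open>G is isomorphic to the path P_n on n = card V vertices.\<close>
definition is_path_graph :: "'a set \<Rightarrow> 'a set set \<Rightarrow> bool" where
  "is_path_graph V E \<longleftrightarrow> (\<exists>f. bij_betw f {0..<card V} V \<and>
     E = {{f i, f (Suc i)} | i. Suc i < card V})"

definition irr_t :: "'a set \<Rightarrow> 'a set set \<Rightarrow> real" where
  "irr_t V E = (1/2) * (\<Sum>x\<in>V. \<Sum>y\<in>V. \<bar>real (degree E x) - real (degree E y)\<bar>)"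

end

theory Submission
  imports Defs
begin


definition hh :: "nat \<Rightarrow> nat \<Rightarrow> real" where
 "hh a b = (if a = 1 then real b - 1 else 0) + (if b = 1 then real a - 1 else 0)
   + (if a = 2 \<and> b \<ge> 3 then real b - 2 else 0) + (if b = 2 \<and> a \<ge> 3 then real a - 2 else 0)"

lemma hh_le: "a \<ge> 1 \<Longrightarrow> b \<ge> 1 \<Longrightarrow> hh a b \<le> \<bar>real a - real b\<bar>"
  unfolding hh_def by auto

lemma hh_eq: "a \<ge> 1 \<Longrightarrow> b \<ge> 1 \<Longrightarrow> \<not> (a \<ge> 3 \<and> b \<ge> 3 \<and> a \<noteq> b) \<Longrightarrow> hh a b = \<bar>real a - real b\<bar>"
  unfolding hh_def by auto

lemma cnt: "finite V \<Longrightarrow> (\<Sum>x\<in>V. if P x then (c::real) else 0) = real (card {x\<in>V. P x}) * c"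
  by (simp add: sum.inter_filter[symmetric])

lemma math:
  fixes V :: "'a set" and d :: "'a \<Rightarrow> nat"
  assumes fin: "finite V" and n: "card V = n" "n \<ge> 5" and pos: "\<forall>v\<in>V. d v \<ge> 1"
    and sum: "(\<Sum>v\<in>V. real (d v)) = 2 * real n - 2" and big: "\<exists>v\<in>V. d v \<ge> 3"
  shows "(1/2) * (\<Sum>x\<in>V. \<Sum>y\<in>V. \<bar>real (d x) - real (d y)\<bar>) \<ge> 4 * real n - 10 \<and>
         ((1/2) * (\<Sum>x\<in>V. \<Sum>y\<in>V. \<bar>real (d x) - real (d y)\<bar>) = 4 * real n - 10 \<longleftrightarrow>
           (card {v\<in>V. d v = 3} = 1 \<and> card {v\<in>V. d v = 2} = n - 4 \<and> card {v\<in>V. d v = 1} = 3))"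
proof -
  define n1 where "n1 = card {v\<in>V. d v = 1}"
  define n2 where "n2 = card {v\<in>V. d v = 2}"
  define k where "k = card {v\<in>V. d v \<ge> 3}"
  define S where "S = (\<Sum>v\<in>V. if d v \<ge> 3 then d v - 2 else 0)"
  define D where "D = (\<Sum>x\<in>V. \<Sum>y\<in>V. \<bar>real (d x) - real (d y)\<bar>)"
  define H where "H = (\<Sum>x\<in>V. \<Sum>y\<in>V. hh (d x) (d y))"
  have DH: "H \<le> D" unfolding H_def D_def
    by (intro sum_mono) (use pos hh_le in auto)
  have S_real: "real S = (\<Sum>v\<in>V. if d v \<ge> 3 then real (d v) - 2 else 0)"
    unfolding S_def of_nat_sum by (intro sum.cong) (auto simp: of_nat_diff)
  have "(\<Sum>v\<in>V. real (d v) - 2) = (\<Sum>v\<in>V. (if d v = 1 then -1 else 0) + (if d v \<ge> 3 then real (d v) - 2 else 0))"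
    by (rule sum.cong) (use pos in auto)
  also have "\<dots> = - real n1 + real S"
    by (simp add: sum.distrib S_real cnt[OF fin] n1_def sum_negf)
  finally have rel: "real n1 = 2 + real S" using sum n by (simp add: sum_subtractf)
  have "real n = (\<Sum>v\<in>V. (if d v = 1 then 1 else 0) + (if d v = 2 then 1 else 0) + (if d v \<ge> 3 then 1 else (0::real)))"
  proof -
    have "(\<Sum>v\<in>V. (if d v = 1 then 1 else 0) + (if d v = 2 then 1 else 0) + (if d v \<ge> 3 then 1 else (0::real))) = (\<Sum>v\<in>V. 1)"
      by (rule sum.cong) (use pos in auto)
    then show ?thesis using n by simp
  qed
  hence ncnt: "real n = real n1 + real n2 + real k"
    by (simp add: sum.distrib cnt[OF fin] n1_def n2_def k_def)
  have T: "(\<Sum>y\<in>V. real (d y) - 1) = real n - 2" using sum n by (simp add: sum_subtractf)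
  have "H = (\<Sum>x\<in>V. \<Sum>y\<in>V. (if d x = 1 then real (d y) - 1 else 0)) + (\<Sum>x\<in>V. \<Sum>y\<in>V. (if d y = 1 then real (d x) - 1 else 0))
     + (\<Sum>x\<in>V. \<Sum>y\<in>V. (if d x = 2 \<and> d y \<ge> 3 then real (d y) - 2 else 0)) + (\<Sum>x\<in>V. \<Sum>y\<in>V. (if d y = 2 \<and> d x \<ge> 3 then real (d x) - 2 else 0))"
    unfolding H_def hh_def by (simp add: sum.distrib)
  also have "\<dots> = 2 * real n1 * (real n - 2) + 2 * real n2 * real S"
  proof -
    have a: "(\<Sum>x\<in>V. \<Sum>y\<in>V. (if d x = 1 then real (d y) - 1 else 0)) = real n1 * (real n - 2)"
    proof -
      have "\<And>x. (\<Sum>y\<in>V. (if d x = 1 then real (d y) - 1 else 0)) = (if d x = 1 then real n - 2 else 0)"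
        using T by (case_tac "d x = 1") simp_all
      then have "(\<Sum>x\<in>V. \<Sum>y\<in>V. (if d x = 1 then real (d y) - 1 else 0)) = (\<Sum>x\<in>V. if d x = 1 then real n - 2 else 0)"
        by (intro sum.cong) simp_all
      also have "\<dots> = real n1 * (real n - 2)" using cnt[OF fin, of "\<lambda>x. d x = 1" "real n - 2"] by (simp add: n1_def)
      finally show ?thesis .
    qed
    have b: "(\<Sum>x\<in>V. \<Sum>y\<in>V. (if d y = 1 then real (d x) - 1 else 0)) = real n1 * (real n - 2)"
      using a by (subst sum.swap) (rule a)
    have c: "(\<Sum>x\<in>V. \<Sum>y\<in>V. (if d x = 2 \<and> d y \<ge> 3 then real (d y) - 2 else 0)) = real n2 * real S"
    proof -
      have "\<And>x. (\<Sum>y\<in>V. (if d x = 2 \<and> d y \<ge> 3 then real (d y) - 2 else 0)) = (if d x = 2 then real S else 0)"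
        by (case_tac "d x = 2") (auto simp: S_real intro!: sum.cong)
      then have "(\<Sum>x\<in>V. \<Sum>y\<in>V. (if d x = 2 \<and> d y \<ge> 3 then real (d y) - 2 else 0)) = (\<Sum>x\<in>V. if d x = 2 then real S else 0)"
        by (intro sum.cong) simp_all
      also have "\<dots> = real n2 * real S" using cnt[OF fin, of "\<lambda>x. d x = 2" "real S"] by (simp add: n2_def)
      finally show ?thesis .
    qed
    have e: "(\<Sum>x\<in>V. \<Sum>y\<in>V. (if d y = 2 \<and> d x \<ge> 3 then real (d x) - 2 else 0)) = real n2 * real S"
      using c by (subst sum.swap) (rule c)
    show ?thesis using a b c e by simp
  qed
  finally have Hv: "H = 2 * real n1 * (real n - 2) + 2 * real n2 * real S" .
  obtain v0 where v0: "v0 \<in> V" "d v0 \<ge> 3" using big by blast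
  have kS: "k \<le> S"
  proof -
    have "k = (\<Sum>v\<in>{v\<in>V. d v \<ge> 3}. 1)" by (simp add: k_def)
    also have "\<dots> \<le> (\<Sum>v\<in>{v\<in>V. d v \<ge> 3}. d v - 2)" by (rule sum_mono) auto
    also have "\<dots> = S" unfolding S_def by (rule sum.inter_filter[OF fin])
    finally show ?thesis .
  qed
  have k1: "k \<ge> 1"
  proof -
    have "v0 \<in> {v\<in>V. d v \<ge> 3}" using v0 by simp
    hence "card {v\<in>V. d v \<ge> 3} > 0" using fin by (intro card_gt_0_iff[THEN iffD2]) auto
    thus ?thesis unfolding k_def by simp
  qed
  show ?thesis
  proof (cases "S \<ge> 2")
    case True
    have "D \<ge> 2 * ((2 + real S) * (real n - 2))" 
    proof -
      have "0 \<le> 2 * real n2 * real S" by simp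
      moreover have "H = 2 * ((2 + real S) * (real n - 2)) + 2 * real n2 * real S" using Hv rel by simp
      ultimately show ?thesis using DH by linarith
    qed
    moreover have "(2 + real S) * (real n - 2) \<ge> 4 * (real n - 2)"
      using True n by (intro mult_right_mono) auto
    ultimately have "D \<ge> 8 * (real n - 2)" by linarith
    hence "D / 2 > 4 * real n - 10" by simp
    moreover have "n1 \<noteq> 3" using rel True by linarith
    ultimately show ?thesis unfolding D_def n1_def by auto
  next
    case False
    hence S1: "S = 1" "k = 1" using kS k1 by auto
    have all3: "\<forall>v\<in>V. d v \<ge> 3 \<longrightarrow> d v = 3"
    proof (intro ballI impI)
      fix v assume v: "v \<in> V" "d v \<ge> 3"
      have "(if d v \<ge> 3 then d v - 2 else 0) \<le> S" unfolding S_def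
        by (rule member_le_sum[OF v(1) _ fin]) auto
      then show "d v = 3" using v S1 by auto
    qed
    have "D = H" unfolding D_def H_def
      by (intro sum.cong refl hh_eq[symmetric]) (use pos all3 in \<open>auto; metis\<close>)+
    hence Dv: "D / 2 = 4 * real n - 10" using Hv rel ncnt S1 by (simp add: algebra_simps)
    have "{v\<in>V. d v = 3} = {v\<in>V. d v \<ge> 3}" using all3 by auto
    hence c3: "card {v\<in>V. d v = 3} = 1" using S1 k_def by simp
    have "n1 = 3" using rel S1 by simp
    moreover have "n2 = n - 4" using ncnt S1 \<open>n1 = 3\<close> by linarith
    ultimately show ?thesis using Dv c3 unfolding D_def n1_def n2_def by auto
  qed
qed


lemma adj_sym: "adj E x y = adj E y x"
  unfolding adj_def by (simp add: insert_commute)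

lemma adj_in: "simple_graph V E \<Longrightarrow> adj E x y \<Longrightarrow> x \<in> V \<and> y \<in> V \<and> x \<noteq> y"
  unfolding simple_graph_def adj_def by (cases "x = y") auto

lemma edge_form: assumes "simple_graph V E" "e \<in> E" "v \<in> e" shows "\<exists>z. z \<noteq> v \<and> e = {v, z}"
proof -
  have "card e = 2" using assms unfolding simple_graph_def by auto
  then obtain a b where ab: "e = {a, b}" "a \<noteq> b" unfolding card_2_iff by blast
  show ?thesis using assms(3) ab by (auto simp: insert_commute)
qed

lemma fin_E: "simple_graph V E \<Longrightarrow> finite E"
  unfolding simple_graph_def by (rule finite_subset[of E "Pow V"]) auto

lemma handshake: assumes "simple_graph V E" shows "(\<Sum>v\<in>V. degree E v) = 2 * card E"
proof -
  have fV: "finite V" and fE: "finite E" using assms fin_E simple_graph_def by auto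
  have "(\<Sum>v\<in>V. degree E v) = (\<Sum>v\<in>V. \<Sum>e\<in>E. if v \<in> e then 1 else 0)"
    unfolding degree_def by (simp add: sum.inter_filter[OF fE, symmetric])
  also have "\<dots> = (\<Sum>e\<in>E. \<Sum>v\<in>V. if v \<in> e then 1 else 0)" by (rule sum.swap)
  also have "\<dots> = (\<Sum>e\<in>E. 2)"
  proof (rule sum.cong[OF refl])
    fix e assume e: "e \<in> E"
    hence "e \<subseteq> V" "card e = 2" using assms unfolding simple_graph_def by auto
    hence "{v\<in>V. v \<in> e} = e" by auto
    thus "(\<Sum>v\<in>V. if v \<in> e then 1 else 0) = (2::nat)"
      using \<open>card e = 2\<close> by (simp add: sum.inter_filter[OF fV, symmetric])
  qed
  finally show ?thesis by simp
qed

definition spath :: "'a set \<Rightarrow> 'a set set \<Rightarrow> 'a list \<Rightarrow> bool" where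
  "spath V E P \<longleftrightarrow> set P \<subseteq> V \<and> distinct P \<and> (\<forall>i. Suc i < length P \<longrightarrow> adj E (P ! i) (P ! Suc i))"

lemma longest:
  assumes "simple_graph V E" "spath V E P0"
  shows "\<exists>P. spath V E P \<and> (\<forall>Q. spath V E Q \<longrightarrow> length Q \<le> length P)"
proof -
  have fV: "finite V" using assms simple_graph_def by auto
  have bnd: "\<forall>k. (\<exists>Q. spath V E Q \<and> length Q = k) \<longrightarrow> k \<le> card V"
    unfolding spath_def using fV by (metis card_mono distinct_card)
  obtain k where "(\<exists>Q. spath V E Q \<and> length Q = k)" "\<forall>y. (\<exists>Q. spath V E Q \<and> length Q = y) \<longrightarrow> y \<le> k"
    using Nat.ex_has_greatest_nat[of "\<lambda>k. \<exists>Q. spath V E Q \<and> length Q = k", OF _ bnd] assms(2) by blast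
  thus ?thesis by blast
qed

lemma has_edge:
  assumes "tree V E" "card V \<ge> 2"
  shows "\<exists>x y. adj E x y"
proof -
  obtain x y where xy: "x \<in> V" "y \<in> V" "x \<noteq> y"
  proof -
    have fV: "finite V" using assms(1) unfolding tree_def simple_graph_def by auto
    have "\<not> (\<forall>x\<in>V. \<forall>y\<in>V. x = y)" using card_le_Suc0_iff_eq[OF fV] assms(2) by auto
    thus ?thesis using that by blast
  qed
  have "(adj E)\<^sup>*\<^sup>* x y" using assms(1) xy unfolding tree_def connected_graph_def by blast
  thus ?thesis using xy(3) by (induction rule: converse_rtranclp_induct) auto
qed

lemma longest_2:
  assumes "tree V E" "card V \<ge> 2"
  shows "\<exists>P. spath V E P \<and> (\<forall>Q. spath V E Q \<longrightarrow> length Q \<le> length P) \<and> length P \<ge> 2"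
proof -
  have sg: "simple_graph V E" using assms tree_def by auto
  obtain x y where a: "adj E x y" using has_edge[OF assms] by blast
  have sp: "spath V E [x, y]" using adj_in[OF sg a] a unfolding spath_def
    by (auto simp: less_Suc_eq)
  obtain P where "spath V E P" "\<forall>Q. spath V E Q \<longrightarrow> length Q \<le> length P"
    using longest[OF sg sp] by blast
  moreover have "length P \<ge> 2" using calculation sp by fastforce
  ultimately show ?thesis by blast
qed

lemma spath_snoc:
  assumes "spath V E P" "P \<noteq> []" "adj E (last P) z" "z \<notin> set P" "z \<in> V"
  shows "spath V E (P @ [z])"
  using assms unfolding spath_def
  by (auto simp: nth_append less_Suc_eq last_conv_nth) (metis One_nat_def diff_Suc_1)

lemma spath_cons:
  assumes "spath V E P" "P \<noteq> []" "adj E z (hd P)" "z \<notin> set P" "z \<in> V"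
  shows "spath V E (z # P)"
  using assms unfolding spath_def
  by (auto simp: nth_Cons hd_conv_nth split: nat.split)

lemma leaf:
  assumes T: "tree V E" and c: "card V \<ge> 2"
  shows "\<exists>v w. v \<in> V \<and> {v, w} \<in> E \<and> v \<noteq> w \<and> (\<forall>e\<in>E. v \<in> e \<longrightarrow> e = {v, w})"
proof -
  have sg: "simple_graph V E" using T tree_def by auto
  obtain P where P: "spath V E P" "\<forall>Q. spath V E Q \<longrightarrow> length Q \<le> length P" "length P \<ge> 2"
    using longest_2[OF T c] by blast
  define L where "L = length P"
  define v where "v = P ! (L - 1)"
  define w where "w = P ! (L - 2)"
  have "P \<noteq> []" using P(3) by auto
  hence lastP: "last P = v" unfolding v_def L_def by (simp add: last_conv_nth)
  have aw: "adj E w v"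
  proof -
    have "Suc (L-2) < L" "Suc (L-2) = L-1" using P(3) L_def by auto
    thus ?thesis using P(1) unfolding spath_def v_def w_def L_def by metis
  qed
  have vw: "v \<in> V" "v \<noteq> w" using adj_in[OF sg aw] by auto
  have ewv: "{v, w} \<in> E" using aw unfolding adj_def by (simp add: insert_commute)
  have "\<forall>e\<in>E. v \<in> e \<longrightarrow> e = {v, w}"
  proof (intro ballI impI)
    fix e assume e: "e \<in> E" "v \<in> e"
    obtain z where z: "z \<noteq> v" "e = {v, z}" using edge_form[OF sg e] by blast
    have avz: "adj E v z" using e z unfolding adj_def by simp
    have zP: "z \<in> set P"
    proof (rule ccontr)
      assume "z \<notin> set P"
      hence "spath V E (P @ [z])" using spath_snoc[OF P(1) \<open>P \<noteq> []\<close>] avz lastP adj_in[OF sg avz] by auto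
      thus False using P(2) by fastforce
    qed
    then obtain j where j: "j < L" "P ! j = z" unfolding L_def by (auto simp: in_set_conv_nth)
    have dP: "distinct P" using P(1) spath_def by auto
    have jne: "j \<noteq> L - 1" using j z(1) v_def by auto
    show "e = {v, w}"
    proof (cases "j = L - 2")
      case True thus ?thesis using z j w_def by simp
    next
      case False
      hence jl: "j + 3 \<le> L" using jne j by linarith
      define Q where "Q = drop j P"
      have "is_cycle E Q"
        unfolding is_cycle_def
      proof (intro conjI allI impI)
        show "3 \<le> length Q" using jl Q_def L_def by simp
        show "distinct Q" using dP Q_def by simp
        fix i assume "Suc i < length Q"
        thus "adj E (Q ! i) (Q ! Suc i)" using P(1) unfolding spath_def Q_def L_def by auto
      next
        have "last Q = v" using Q_def lastP jl L_def by simp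
        moreover have "hd Q = z" using Q_def j L_def by (simp add: hd_drop_conv_nth)
        ultimately show "adj E (last Q) (hd Q)" using avz by simp
      qed
      thus ?thesis using T unfolding tree_def acyclic_graph_def by blast
    qed
  qed
  thus ?thesis using vw ewv by blast
qed

lemma remove_leaf:
  assumes T: "tree V E" and v: "v \<in> V" "{v, w} \<in> E" "v \<noteq> w" and lf: "\<forall>e\<in>E. v \<in> e \<longrightarrow> e = {v, w}"
  shows "tree (V - {v}) (E - {{v, w}})"
proof -
  have sg: "simple_graph V E" using T tree_def by auto
  let ?E = "E - {{v, w}}"
  have nv: "\<And>e. e \<in> ?E \<Longrightarrow> v \<notin> e" using lf by auto
  have wV: "w \<in> V" using sg v unfolding simple_graph_def by auto
  have sg': "simple_graph (V - {v}) ?E" using sg nv unfolding simple_graph_def by blast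
  have conn: "(adj E)\<^sup>*\<^sup>* x y \<Longrightarrow> x \<noteq> v \<Longrightarrow>
      (y = v \<longrightarrow> (adj ?E)\<^sup>*\<^sup>* x w) \<and> (y \<noteq> v \<longrightarrow> (adj ?E)\<^sup>*\<^sup>* x y)" for x y
  proof (induction rule: rtranclp_induct)
    case base thus ?case by simp
  next
    case (step y z)
    have yz: "y \<noteq> z" using adj_in[OF sg step(2)] by simp
    show ?case
    proof (cases "z = v")
      case True
      hence "{y, v} = {v, w}" using lf step(2) unfolding adj_def by blast
      hence "y = w" using yz True by (auto simp: doubleton_eq_iff)
      thus ?thesis using step True yz by auto
    next
      case False
      show ?thesis
      proof (cases "y = v")
        case True
        hence "{v, z} = {v, w}" using lf step(2) unfolding adj_def by simp
        hence "z = w" using yz True by (auto simp: doubleton_eq_iff)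
        thus ?thesis using step True False by auto
      next
        case yv: False
        have "adj ?E y z" using step(2) yv False unfolding adj_def by auto
        thus ?thesis using step yv False by (auto intro: rtranclp.rtrancl_into_rtrancl)
      qed
    qed
  qed
  have "connected_graph (V - {v}) ?E" unfolding connected_graph_def
  proof (intro ballI)
    fix x y assume "x \<in> V - {v}" "y \<in> V - {v}"
    moreover hence "(adj E)\<^sup>*\<^sup>* x y" using T unfolding tree_def connected_graph_def by auto
    ultimately show "(adj ?E)\<^sup>*\<^sup>* x y" using conn by auto
  qed
  moreover have "acyclic_graph ?E"
  proof -
    have "is_cycle ?E cs \<Longrightarrow> is_cycle E cs" for cs unfolding is_cycle_def adj_def by auto
    thus ?thesis using T unfolding tree_def acyclic_graph_def by blast
  qed
  moreover have "V - {v} \<noteq> {}" using wV v by auto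
  ultimately show ?thesis using sg' unfolding tree_def by blast
qed

lemma tree_card_E: "tree V E \<Longrightarrow> card E = card V - 1"
proof (induction "card V" arbitrary: V E rule: less_induct)
  case less
  have sg: "simple_graph V E" using less.prems tree_def by auto
  have fV: "finite V" using sg simple_graph_def by auto
  have "card V > 0" using less.prems fV unfolding tree_def by (simp add: card_gt_0_iff)
  hence V1: "card V \<ge> 1" by simp
  show ?case
  proof (cases "card V \<ge> 2")
    case False
    hence cV: "card V = 1" using V1 by simp
    have "E = {}"
    proof (rule ccontr)
      assume "E \<noteq> {}"
      then obtain e where "e \<in> E" by blast
      hence eV: "e \<subseteq> V" and ce: "card e = 2" using sg unfolding simple_graph_def by auto
      have "card e \<le> card V" by (rule card_mono[OF fV eV])
      thus False using cV ce by simp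
    qed
    thus ?thesis using cV by simp
  next
    case True
    obtain v w where vw: "v \<in> V" "{v, w} \<in> E" "v \<noteq> w" "\<forall>e\<in>E. v \<in> e \<longrightarrow> e = {v, w}"
      using leaf[OF less.prems True] by blast
    have T': "tree (V - {v}) (E - {{v, w}})" using remove_leaf[OF less.prems vw] .
    have cV': "card (V - {v}) = card V - 1" using vw fV by simp
    have lt: "card (V - {v}) < card V" using cV' True by simp
    have "card (E - {{v, w}}) = card (V - {v}) - 1"
      using less.hyps[OF lt T'] by simp
    moreover have "card (E - {{v, w}}) = card E - 1" by (rule card_Diff_singleton[OF vw(2)])
    moreover have "card E > 0" using vw fin_E[OF sg] card_gt_0_iff by blast
    ultimately show ?thesis using cV' True by linarith
  qed
qed

lemma degree_pos:
  assumes T: "tree V E" and c: "card V \<ge> 2" and x: "x \<in> V"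
  shows "degree E x \<ge> 1"
proof -
  have sg: "simple_graph V E" using T tree_def by auto
  have fV: "finite V" using sg simple_graph_def by auto
  obtain y where y: "y \<in> V" "y \<noteq> x"
  proof -
    have "\<not> (\<forall>x\<in>V. \<forall>y\<in>V. x = y)" using card_le_Suc0_iff_eq[OF fV] c by auto
    thus ?thesis using that x by blast
  qed
  have "(adj E)\<^sup>*\<^sup>* x y" using T x y unfolding tree_def connected_graph_def by blast
  then obtain z where "adj E x z" using y(2) by (induction rule: converse_rtranclp_induct) auto
  hence "{x, z} \<in> {e \<in> E. x \<in> e}" unfolding adj_def by auto
  moreover have "finite {e \<in> E. x \<in> e}" using fin_E[OF sg] by simp
  ultimately have "card {e \<in> E. x \<in> e} > 0" using card_gt_0_iff by blast
  thus ?thesis unfolding degree_def by simp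
qed

lemma internal:
  assumes sg: "simple_graph V E" and P: "spath V E P" and i: "0 < i" "Suc i < length P"
    and dg: "degree E (P ! i) \<le> 2" and e: "{P ! i, z} \<in> E"
  shows "z = P ! (i - 1) \<or> z = P ! Suc i"
proof -
  have dP: "distinct P" and adjP: "\<forall>k. Suc k < length P \<longrightarrow> adj E (P ! k) (P ! Suc k)"
    using P unfolding spath_def by auto
  define a where "a = {P ! (i - 1), P ! i}"
  define b where "b = {P ! i, P ! Suc i}"
  have "Suc (i - 1) = i" using i by simp
  hence "adj E (P ! (i - 1)) (P ! i)" using adjP i by (metis Suc_lessD)
  hence aE: "a \<in> E" unfolding a_def adj_def .
  have bE: "b \<in> E" using adjP i unfolding b_def adj_def by blast
  have n1: "P ! (i - 1) \<noteq> P ! Suc i" using dP i by (simp add: nth_eq_iff_index_eq)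
  have n2: "P ! (i - 1) \<noteq> P ! i" using dP i by (simp add: nth_eq_iff_index_eq)
  have n3: "P ! i \<noteq> P ! Suc i" using dP i by (simp add: nth_eq_iff_index_eq)
  have ab: "a \<noteq> b" using n1 n2 n3 unfolding a_def b_def by (auto simp: doubleton_eq_iff)
  define Sx where "Sx = {e \<in> E. P ! i \<in> e}"
  have sub: "{a, b} \<subseteq> Sx" using aE bE unfolding Sx_def a_def b_def by auto
  have fin: "finite Sx" using fin_E[OF sg] unfolding Sx_def by simp
  have "card {a, b} = 2" using ab by simp
  moreover have "card Sx \<le> 2" using dg unfolding degree_def Sx_def .
  ultimately have "Sx = {a, b}" using card_seteq[OF fin sub] by simp
  moreover have "{P ! i, z} \<in> Sx" using e unfolding Sx_def by simp
  ultimately have "{P ! i, z} = a \<or> {P ! i, z} = b" by simp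
  moreover have "z \<noteq> P ! i" using adj_in[OF sg, of "P ! i" z] e unfolding adj_def by auto
  ultimately show ?thesis unfolding a_def b_def using n2 n3 by (auto simp: doubleton_eq_iff)
qed

lemma tree_path:
  assumes T: "tree V E" and c: "card V \<ge> 2" and dg: "\<forall>v\<in>V. degree E v \<le> 2"
  shows "is_path_graph V E"
proof -
  have sg: "simple_graph V E" using T tree_def by auto
  have fV: "finite V" using sg simple_graph_def by auto
  obtain P where P: "spath V E P" "\<forall>Q. spath V E Q \<longrightarrow> length Q \<le> length P" "length P \<ge> 2"
    using longest_2[OF T c] by blast
  define L where "L = length P"
  have dP: "distinct P" and PV: "set P \<subseteq> V" and adjP: "\<forall>k. Suc k < L \<longrightarrow> adj E (P ! k) (P ! Suc k)"
    using P(1) unfolding spath_def L_def by auto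
  have Pne: "P \<noteq> []" using P(3) by auto
  have dgP: "degree E (P ! k) \<le> 2" if "k < L" for k
    using dg PV nth_mem that L_def by blast
  have nbr: "z \<in> set P" if y: "y \<in> set P" and ayz: "adj E y z" for y z
  proof (rule ccontr)
    assume zn: "z \<notin> set P"
    obtain i where i: "i < L" "P ! i = y" using y unfolding L_def by (auto simp: in_set_conv_nth)
    have zV: "z \<in> V" using adj_in[OF sg ayz] by simp
    show False
    proof (cases "i = L - 1")
      case True
      hence "last P = y" using i Pne L_def by (simp add: last_conv_nth)
      hence "spath V E (P @ [z])" using spath_snoc[OF P(1) Pne _ zn zV] ayz by simp
      thus False using P(2) by fastforce
    next
      case F1: False
      show False
      proof (cases "i = 0")
        case True
        hence "hd P = y" using i Pne by (simp add: hd_conv_nth)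
        hence "spath V E (z # P)" using spath_cons[OF P(1) Pne _ zn zV] ayz adj_sym by metis
        thus False using P(2) by fastforce
      next
        case False
        have "Suc i < length P" using F1 i L_def by simp
        moreover have "{P ! i, z} \<in> E" using ayz i unfolding adj_def by simp
        ultimately have "z = P ! (i - 1) \<or> z = P ! Suc i"
          using internal[OF sg P(1), of i z] False dgP i by auto
        thus False using zn \<open>Suc i < length P\<close> by auto
      qed
    qed
  qed
  have setP: "set P = V"
  proof
    show "set P \<subseteq> V" by (rule PV)
    show "V \<subseteq> set P"
    proof
      fix x assume x: "x \<in> V"
      have p0: "P ! 0 \<in> set P" using Pne by simp
      hence "P ! 0 \<in> V" using PV by auto
      hence "(adj E)\<^sup>*\<^sup>* (P ! 0) x" using T x unfolding tree_def connected_graph_def by blast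
      thus "x \<in> set P" using p0 by (induction rule: rtranclp_induct) (auto intro: nbr)
    qed
  qed
  have LV: "L = card V" using distinct_card[OF dP] setP L_def by simp
  have claim: "j = Suc i" if ij: "i < j" "j < L" and e: "{P ! i, P ! j} \<in> E" for i j
  proof (rule ccontr)
    assume nj: "j \<noteq> Suc i"
    hence j2: "i + 2 \<le> j" using ij by simp
    show False
    proof (cases "0 < i")
      case True
      have "P ! j = P ! (i - 1) \<or> P ! j = P ! Suc i"
        using internal[OF sg P(1) True, of "P ! j"] ij e dgP L_def by auto
      thus False using dP ij True nj L_def by (auto simp: nth_eq_iff_index_eq)
    next
      case False
      hence i0: "i = 0" by simp
      show False
      proof (cases "j = L - 1")
        case False
        have e': "{P ! j, P ! i} \<in> E" using e by (simp add: insert_commute)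
        have "P ! i = P ! (j - 1) \<or> P ! i = P ! Suc j"
          using internal[OF sg P(1), of j "P ! i"] ij e' dgP False j2 L_def by auto
        thus False using dP ij j2 False L_def by (auto simp: nth_eq_iff_index_eq)
      next
        case True
        have "is_cycle E P" unfolding is_cycle_def
        proof (intro conjI allI impI)
          show "3 \<le> length P" using j2 ij L_def by simp
          show "distinct P" by (rule dP)
          fix k assume "Suc k < length P" thus "adj E (P ! k) (P ! Suc k)" using adjP L_def by simp
        next
          have "last P = P ! j" using True Pne L_def by (simp add: last_conv_nth)
          moreover have "hd P = P ! i" using i0 Pne by (simp add: hd_conv_nth)
          ultimately show "adj E (last P) (hd P)" using e unfolding adj_def by (simp add: insert_commute)
        qed
        thus False using T unfolding tree_def acyclic_graph_def by blast
      qed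
    qed
  qed
  have bij: "bij_betw ((!) P) {0..<card V} V"
    by (rule bij_betw_nth[OF dP]) (use LV L_def setP in auto)
  have "E = {{P ! i, P ! Suc i} | i. Suc i < card V}"
  proof
    show "{{P ! i, P ! Suc i} | i. Suc i < card V} \<subseteq> E" using adjP LV unfolding adj_def by auto
    show "E \<subseteq> {{P ! i, P ! Suc i} | i. Suc i < card V}"
    proof
      fix e assume e: "e \<in> E"
      hence eV: "e \<subseteq> V" and "card e = 2" using sg unfolding simple_graph_def by auto
      then obtain y z where yz: "e = {y, z}" "y \<noteq> z" unfolding card_2_iff by blast
      obtain i where i: "i < L" "P ! i = y" using eV yz setP L_def by (auto simp: in_set_conv_nth)
      obtain j where j: "j < L" "P ! j = z" using eV yz setP L_def by (auto simp: in_set_conv_nth)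
      have "i \<noteq> j" using i j yz by auto
      show "e \<in> {{P ! i, P ! Suc i} | i. Suc i < card V}"
      proof (cases "i < j")
        case True
        hence "j = Suc i" using claim[of i j] j e yz i by simp
        thus ?thesis using yz i j LV by auto
      next
        case False
        hence ji: "j < i" using \<open>i \<noteq> j\<close> by simp
        have "{P ! j, P ! i} \<in> E" using e yz i j by (simp add: insert_commute)
        hence "i = Suc j" using claim[of j i] ji i by simp
        thus ?thesis using yz i j LV by (auto simp: insert_commute)
      qed
    qed
  qed
  thus ?thesis unfolding is_path_graph_def using bij by blast
qed


theorem theorem6:
  fixes V :: "'a set" and E :: "'a set set" and n :: nat
  assumes "tree V E" and "card V = n" and "n \<ge> 5" and "\<not> is_path_graph V E"
  shows "irr_t V E \<ge> 4 * real n - 10 \<and>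
         (irr_t V E = 4 * real n - 10 \<longleftrightarrow>
           (card {v\<in>V. degree E v = 3} = 1 \<and>
            card {v\<in>V. degree E v = 2} = n - 4 \<and>
            card {v\<in>V. degree E v = 1} = 3))"
proof -
  have sg: "simple_graph V E" using assms(1) tree_def by auto
  have fV: "finite V" using sg simple_graph_def by auto
  have c2: "card V \<ge> 2" using assms(2,3) by simp
  have pos: "\<forall>v\<in>V. degree E v \<ge> 1" using degree_pos[OF assms(1) c2] by blast
  have "(\<Sum>v\<in>V. degree E v) = 2 * card E" by (rule handshake[OF sg])
  also have "card E = n - 1" using tree_card_E[OF assms(1)] assms(2) by simp
  finally have "real (\<Sum>v\<in>V. degree E v) = real (2 * (n - 1))" by simp
  hence sum: "(\<Sum>v\<in>V. real (degree E v)) = 2 * real n - 2" using assms(3) by (simp add: of_nat_diff)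
  have big: "\<exists>v\<in>V. degree E v \<ge> 3"
  proof (rule ccontr)
    assume "\<not> ?thesis"
    hence "\<forall>v\<in>V. degree E v \<le> 2" by auto
    thus False using tree_path[OF assms(1) c2] assms(4) by blast
  qed
  show ?thesis unfolding irr_t_def using math[OF fV assms(2) assms(3) pos sum big] by blast
qed

end
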